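(* Consider any realization of a run of Algorithm 4 (described in the context) under the standing assumption. Then: (i) if $k\in\mathcal{B}\cap\mathcal{S}$, then $f_k-f_{k+1}\ge\tfrac{\eta}{4}\epsilon_H\delta_k^2$; (ii) if $k\in\mathcal{I}\cap\mathcal{S}$, then $\|g_k\|>\epsilon_g$, the flag returned by Algorithm 2 at iteration $k$ is INT-RES, and \[ f_k-f_{k+1}\ \ge\ \tfrac{\eta}{4(7+2L_H)}\min\big\{\|g_{k+1}\|^2\epsilon_H^{-1},\ \epsilon_H^3\big\}. \]
   Context: Let $f:\mathbb{R}^n\to\mathbb{R}$ with gradient $g=\nabla f$ and Hessian $H=\nabla^2f$; $\|\cdot\|$ is the Euclidean norm, $\lambda_{\min}$ the smallest eigenvalue, $\mathbb{S}^n$ the real symmetric $n\times n$ matrices. Write $f_k=f(x_k)$, $g_k=g(x_k)$, $H_k=H(x_k)$, $m_k(x)=f_k+g_k^T(x-x_k)+\tfrac12(x-x_k)^TH_k(x-x_k)$. Exact arithmetic is assumed. Algorithm 2 (truncated CG; inputs nonzero $g$, $H\in\mathbb{S}^n$, $\epsilon>0$, $\delta>0$, $\zeta\in(0,1)$, flag capCG, and $M\ge\|H\|$): $k_{\max}=\min\{n,\tfrac12\sqrt{\kappa}\ln(4\kappa^{3/2}/\zeta)\}$ with $\kappa=(M+2\epsilon)/\epsilon$ if capCG is true, else $k_{\max}=n$. Set $y_0=0,r_0=g,p_0=-g,j=0$. While $j<k_{\max}$: if $p_j^T(H+2\epsilon I)p_j\le\epsilon\|p_j\|^2$, return $s=y_j+\sigma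 p_j$ with $\sigma\ge0$, $\|s\|=\delta$, flag BND-NEG; set $\alpha_j=\|r_j\|^2/(p_j^T(H+2\epsilon I)p_j)$, $y_{j+1}=y_j+\alpha_jp_j$; if $\|y_{j+1}\|\ge\delta$, return $s=y_j+\sigma p_j$ with $\sigma\ge0$, $\|s\|=\delta$, flag BND-NORM; set $r_{j+1}=r_j+\alpha_j(H+2\epsilon I)p_j$; if $\|r_{j+1}\|\le\tfrac\zeta2\min\{\|g\|,\epsilon\|y_{j+1}\|\}$, return $s=y_{j+1}$, flag INT-RES; set $\beta_{j+1}=\|r_{j+1}\|^2/\|r_j\|^2$, $p_{j+1}=-r_{j+1}+\beta_{j+1}p_j$, $j\leftarrow j+1$. On loop exit return $s=y_j$, flag INT-MAX. Algorithm 3 (minimum eigenvalue oracle, MEO; inputs $g$, $H\in\mathbb{S}^n$, $\epsilon>0$, $\delta>0$, $\xi\in(0,1)$, $M\ge\|H\|$): a possibly randomized procedure that either returns $s=\pm\delta v$ with $\|v\|=1$, $v^THv\le-\epsilon/2$, satisfying $g^Ts\le0$, $s^THs\le-\tfrac12\epsilon\|s\|^2$, $\|s\|=\delta$, or returns an indication that $H\succeq-\epsilon I$. Algorithm 4 (inexact trust-region Newton-CG). Inputs: $\epsilon_g,\epsilon_H>0$; $\gamma_1\in(0,1)$, $\gamma_2\ge1$, $\psi\in(1/\gamma_2,1]$; $x_0$; $\delta_0>0$; $\delta_{\max}\ge\delta_0$; $\eta\in(0,1)$; $\zeta\in(0,1)$; $\xi\in[0,1)$; capCG; $M\ge L_g$.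 For $k=0,1,\dots$: evaluate $g_k,H_k$. If $g_k\ne0$, call Algorithm 2 with $(g_k,H_k,\epsilon_H,\delta_k,\zeta,\text{capCG},M)$ obtaining $s_k^{CG}$ and flag outCG; else set $s_k^{CG}=0$, outCG$=$INT-RES. If outCG$\in\{$BND-NEG, BND-NORM$\}$ or ($\|g_k\|>\epsilon_g$ and outCG$=$INT-RES), set $s_k=s_k^{CG}$. Otherwise call Algorithm 3 with $(g_k,H_k,\epsilon_H,\delta_k,\xi,M)$; if it indicates $H_k\succeq-\epsilon_HI$, return $x_k$ (terminate), else take its output as $s_k$. Set $\rho_k=\frac{f_k-f(x_k+s_k)}{m_k(x_k)-m_k(x_k+s_k)}$. If $\rho_k\ge\eta$: $x_{k+1}=x_k+s_k$ and $\delta_{k+1}=\min\{\gamma_2\delta_k,\delta_{\max}\}$ if $\|s_k\|\ge\psi\delta_k$, else $\delta_{k+1}=\delta_k$. If $\rho_k<\eta$: $x_{k+1}=x_k$, $\delta_{k+1}=\gamma_1\|s_k\|$. $\mathcal{K}$ is the set of indices $k$ such that iteration $k$ is completed without termination (for the given realization); $\mathcal{S}=\{k\in\mathcal{K}:\rho_k\ge\eta\}$, $\mathcal{I}=\{k\in\mathcal{K}:\|s_k\|<\delta_k\}$, $\mathcal{B}=\{k\in\mathcal{K}:\|s_k\|=\delta_k\}$. Standing assumption: $\{f_k\}$ is bounded below by some $f_{\rm low}\in\mathbb{R}$, and all segments $[x_k,x_k+s_k]$ lie in an open set on which $f$ is twice continuously differentiable with gradient Lipschitz with constant $L_g>0$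 and Hessian Lipschitz with constant $L_H>0$. *)

theory Defs
  imports "HOL-Analysis.Analysis"
begin

datatype cgflag = BND_NEG | BND_NORM | INT_RES | INT_MAX

definition bnd_step :: "real^'n \<Rightarrow> real^'n \<Rightarrow> real \<Rightarrow> real^'n" where
  "bnd_step y p \<delta> = y + (SOME \<sigma>. \<sigma> \<ge> 0 \<and> norm (y + \<sigma> *\<^sub>R p) = \<delta>) *\<^sub>R p"

definition cg_kmax :: "nat \<Rightarrow> real \<Rightarrow> real \<Rightarrow> real \<Rightarrow> bool \<Rightarrow> real" where
  "cg_kmax n \<epsilon> \<zeta> M capCG =
     (if capCG then
        (let \<kappa> = (M + 2 * \<epsilon>) / \<epsilon>
         in min (real n) (1/2 * sqrt \<kappa> * ln (4 * \<kappa> powr (3/2) / \<zeta>)))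
      else real n)"

text \<open>Main loop of Algorithm 2. The first argument is fuel; it starts at n with j = 0,
  so fuel = 0 only when j = n \<ge> kmax, i.e. when the loop condition fails anyway.\<close>
fun cg_loop :: "nat \<Rightarrow> nat \<Rightarrow> real \<Rightarrow> real^'n \<Rightarrow> real^'n^'n \<Rightarrow> real \<Rightarrow> real \<Rightarrow> real
                 \<Rightarrow> real^'n \<Rightarrow> real^'n \<Rightarrow> real^'n \<Rightarrow> (real^'n) \<times> cgflag" where
  "cg_loop 0 j kmax g H \<epsilon> \<delta> \<zeta> y r p = (y, INT_MAX)"
| "cg_loop (Suc fuel) j kmax g H \<epsilon> \<delta> \<zeta> y r p =
    (if \<not> (real j < kmax) then (y, INT_MAX)
     else let Hp = H *v p + (2 * \<epsilon>) *\<^sub>R p in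
     if p \<bullet> Hp \<le> \<epsilon> * (norm p)\<^sup>2 then (bnd_step y p \<delta>, BND_NEG)
     else let \<alpha> = (norm r)\<^sup>2 / (p \<bullet> Hp); y' = y + \<alpha> *\<^sub>R p in
     if norm y' \<ge> \<delta> then (bnd_step y p \<delta>, BND_NORM)
     else let r' = r + \<alpha> *\<^sub>R Hp in
     if norm r' \<le> \<zeta> / 2 * min (norm g) (\<epsilon> * norm y') then (y', INT_RES)
     else let \<beta> = (norm r')\<^sup>2 / (norm r)\<^sup>2; p' = - r' + \<beta> *\<^sub>R p in
     cg_loop fuel (Suc j) kmax g H \<epsilon> \<delta> \<zeta> y' r' p')"

definition truncated_cg :: "real^'n \<Rightarrow> real^'n^'n \<Rightarrow> real \<Rightarrow> real \<Rightarrow> real \<Rightarrow> bool \<Rightarrow> real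
                            \<Rightarrow> (real^'n) \<times> cgflag" where
  "truncated_cg g H \<epsilon> \<delta> \<zeta> capCG M =
     cg_loop CARD('n) 0 (cg_kmax CARD('n) \<epsilon> \<zeta> M capCG) g H \<epsilon> \<delta> \<zeta> 0 g (- g)"

text \<open>Specification of a (non-terminating) output s of Algorithm 3 (MEO).\<close>
definition meo_output :: "real^'n \<Rightarrow> real^'n^'n \<Rightarrow> real \<Rightarrow> real \<Rightarrow> real^'n \<Rightarrow> bool" where
  "meo_output g H \<epsilon> \<delta> s \<longleftrightarrow>
     (\<exists>v. norm v = 1 \<and> v \<bullet> (H *v v) \<le> - \<epsilon> / 2 \<and> (s = \<delta> *\<^sub>R v \<or> s = - (\<delta> *\<^sub>R v)))
     \<and> g \<bullet> s \<le> 0 \<and> s \<bullet> (H *v s) \<le> - (1/2) * \<epsilon> * (norm s)\<^sup>2 \<and> norm s = \<delta>"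

text \<open>CG step and flag at an iteration of Algorithm 4 (convention for g = 0).\<close>
definition cg_out :: "real^'n \<Rightarrow> real^'n^'n \<Rightarrow> real \<Rightarrow> real \<Rightarrow> real \<Rightarrow> bool \<Rightarrow> real
                      \<Rightarrow> (real^'n) \<times> cgflag" where
  "cg_out g H \<epsilon>H \<delta> \<zeta> capCG M =
     (if g \<noteq> 0 then truncated_cg g H \<epsilon>H \<delta> \<zeta> capCG M else (0, INT_RES))"

definition accept_cg :: "real \<Rightarrow> real^'n \<Rightarrow> cgflag \<Rightarrow> bool" where
  "accept_cg \<epsilon>g g fl \<longleftrightarrow> fl = BND_NEG \<or> fl = BND_NORM \<or> (norm g > \<epsilon>g \<and> fl = INT_RES)"

definition model_decrease :: "real^'n \<Rightarrow> real^'n^'n \<Rightarrow> real^'n \<Rightarrow> real" where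
  "model_decrease g H s = - (g \<bullet> s + 1/2 * (s \<bullet> (H *v s)))"

definition alg4_rho :: "(real^'n \<Rightarrow> real) \<Rightarrow> (real^'n \<Rightarrow> real^'n) \<Rightarrow> (real^'n \<Rightarrow> real^'n^'n)
                        \<Rightarrow> real^'n \<Rightarrow> real^'n \<Rightarrow> real" where
  "alg4_rho f g H xk sk = (f xk - f (xk + sk)) / model_decrease (g xk) (H xk) sk"

text \<open>A realization of a run of Algorithm 4: iterates x, radii delta, steps s, and the set K
  of iterations completed without termination (an initial segment of the naturals).
  Iteration k \<in> K is carried out as specified (the MEO output being any vector meeting
  its specification); the first k \<notin> K is an iteration in which the MEO was called and
  indicated H_k \<succeq> -eps_H I (termination).\<close>
definition alg4_realization ::
  "(real^'n \<Rightarrow> real) \<Rightarrow> (real^'n \<Rightarrow> real^'n) \<Rightarrow> (real^'n \<Rightarrow> real^'n^'n)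
   \<Rightarrow> real \<Rightarrow> real \<Rightarrow> real \<Rightarrow> real \<Rightarrow> real \<Rightarrow> real^'n \<Rightarrow> real \<Rightarrow> real \<Rightarrow> real \<Rightarrow> real
   \<Rightarrow> bool \<Rightarrow> real
   \<Rightarrow> (nat \<Rightarrow> real^'n) \<Rightarrow> (nat \<Rightarrow> real) \<Rightarrow> (nat \<Rightarrow> real^'n) \<Rightarrow> nat set \<Rightarrow> bool" where
  "alg4_realization f g H \<epsilon>g \<epsilon>H \<gamma>1 \<gamma>2 \<psi> x0 \<delta>0 \<delta>max \<eta> \<zeta> capCG M x \<delta> s K \<longleftrightarrow>
     x 0 = x0 \<and> \<delta> 0 = \<delta>0 \<and>
     (\<forall>k j. k \<in> K \<longrightarrow> j \<le> k \<longrightarrow> j \<in> K) \<and>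
     (\<forall>k \<in> K.
        (if accept_cg \<epsilon>g (g (x k)) (snd (cg_out (g (x k)) (H (x k)) \<epsilon>H (\<delta> k) \<zeta> capCG M))
         then s k = fst (cg_out (g (x k)) (H (x k)) \<epsilon>H (\<delta> k) \<zeta> capCG M)
         else meo_output (g (x k)) (H (x k)) \<epsilon>H (\<delta> k) (s k)) \<and>
        (if alg4_rho f g H (x k) (s k) \<ge> \<eta>
         then x (Suc k) = x k + s k \<and>
              \<delta> (Suc k) = (if norm (s k) \<ge> \<psi> * \<delta> k then min (\<gamma>2 * \<delta> k) \<delta>max else \<delta> k)
         else x (Suc k) = x k \<and> \<delta> (Suc k) = \<gamma>1 * norm (s k))) \<and>
     (\<forall>k. k \<notin> K \<longrightarrow> (\<forall>j < k. j \<in> K) \<longrightarrow>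
        \<not> accept_cg \<epsilon>g (g (x k)) (snd (cg_out (g (x k)) (H (x k)) \<epsilon>H (\<delta> k) \<zeta> capCG M)))"

end

theory Submission
  imports Defs
begin


lemma g_taylor:
  fixes g :: "real^'n \<Rightarrow> real^'n" and H :: "real^'n \<Rightarrow> real^'n^'n"
  assumes S: "convex S" and der: "\<forall>y\<in>S. (g has_derivative (\<lambda>h. H y *v h)) (at y)"
    and B: "\<forall>y\<in>S. onorm (\<lambda>v. (H y - H x0) *v v) \<le> B"
    and a: "a \<in> S" and b: "b \<in> S" and x0: "x0 \<in> S"
  shows "norm (g b - g a - H x0 *v (b - a)) \<le> norm (b - a) * B"
proof (rule differentiable_bound_linearization[where S=S and f'="\<lambda>y h. H y *v h"])
  fix t :: real assume "t \<in> {0..1}"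
  then show "a + t *\<^sub>R (b - a) \<in> S"
    using convexD_alt[OF S a b, of t] by (simp add: algebra_simps)
next
  fix y assume "y \<in> S" then show "(g has_derivative (\<lambda>h. H y *v h)) (at y within S)"
    using der has_derivative_at_withinI by blast
next
  fix y assume "y \<in> S"
  then show "onorm ((\<lambda>h. H y *v h) - (\<lambda>h. H x0 *v h)) \<le> B"
    using B by (simp add: fun_diff_def matrix_vector_mult_diff_rdistrib)
qed (rule x0)



lemma seg_pt: "a + t *\<^sub>R (b - a) \<in> closed_segment a b" if "t \<in> {0..1}" for a b :: "'a::real_normed_vector"
  using that unfolding closed_segment_def by (rule_tac CollectI, rule_tac x=t in exI) (simp add: algebra_simps)

lemma delta_est:
  fixes f :: "real^'n \<Rightarrow> real" and g :: "real^'n \<Rightarrow> real^'n" and H :: "real^'n \<Rightarrow> real^'n^'n"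
  assumes fd: "\<And>y. y \<in> cball x (t * (norm u + norm v)) \<Longrightarrow> (f has_derivative (\<lambda>h. g y \<bullet> h)) (at y)"
    and gd: "\<And>y. y \<in> cball x (t * (norm u + norm v)) \<Longrightarrow> (g has_derivative (\<lambda>h. H y *v h)) (at y)"
    and Hl: "\<And>y. y \<in> cball x (t * (norm u + norm v)) \<Longrightarrow> onorm (\<lambda>w. (H y - H x) *v w) \<le> LH * norm (y - x)"
    and t: "0 \<le> t" and LH: "0 \<le> LH"
  shows "\<bar>f (x + t *\<^sub>R u + t *\<^sub>R v) - f (x + t *\<^sub>R v) - f (x + t *\<^sub>R u) + f x - t^2 * (v \<bullet> (H x *v u))\<bar>
          \<le> t^3 * (3 * LH * norm u * norm v * (norm u + norm v))"
proof -
  define R where "R = t * (norm u + norm v)"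
  have tu: "0 \<le> t * norm u" using t by simp
  define D where "D = cball x R"
  have R0: "0 \<le> R" using t by (simp add: R_def)
  have xD: "x \<in> D" using R0 by (simp add: D_def)
  have HB: "\<forall>y\<in>D. onorm (\<lambda>w. (H y - H x) *v w) \<le> LH * R"
  proof
    fix y assume "y \<in> D"
    then have "norm (y - x) \<le> R" by (simp add: D_def dist_norm norm_minus_commute)
    then show "onorm (\<lambda>w. (H y - H x) *v w) \<le> LH * R"
      using Hl[of y] \<open>y \<in> D\<close> LH unfolding D_def R_def
      by (meson mult_left_mono order_trans)
  qed
  define E where "E z = g (z + t *\<^sub>R u) - g z - H x *v (t *\<^sub>R u)" for z
  have Ebd: "norm (E z) \<le> t * norm u * (LH * R)" if "z \<in> closed_segment x (x + t *\<^sub>R v)" for z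
  proof -
    have "norm (z - x) \<le> t * norm v" using segment_bound1[OF that] t by simp
    then have zD: "z \<in> D" and zuD: "z + t *\<^sub>R u \<in> D"
      unfolding D_def R_def mem_cball dist_norm
      using t norm_triangle_ineq[of "z - x" "t *\<^sub>R u"] tu
      by (auto simp: norm_minus_commute algebra_simps) (use tu in linarith)
    have "norm (g (z + t *\<^sub>R u) - g z - H x *v ((z + t *\<^sub>R u) - z)) \<le> norm ((z + t *\<^sub>R u) - z) * (LH * R)"
      by (rule g_taylor[OF _ _ HB zD zuD xD]) (auto simp: D_def gd R_def)
    then show ?thesis using t by (simp add: E_def)
  qed
  define S where "S = closed_segment x (x + t *\<^sub>R v)"
  have xS: "x \<in> S" by (simp add: S_def)
  have SD: "z \<in> cball x (t * (norm u + norm v))" "z + t *\<^sub>R u \<in> cball x (t * (norm u + norm v))" if "z \<in> S" for z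
  proof -
    have "norm (z - x) \<le> t * norm v" using segment_bound1[OF that[unfolded S_def]] t by simp
    then show "z \<in> cball x (t * (norm u + norm v))" "z + t *\<^sub>R u \<in> cball x (t * (norm u + norm v))"
      unfolding mem_cball dist_norm
      using t norm_triangle_ineq[of "z - x" "t *\<^sub>R u"] tu
      by (auto simp: norm_minus_commute algebra_simps) (use tu in linarith)
  qed
  define \<Phi> where "\<Phi> z = f (z + t *\<^sub>R u) - f z" for z
  have step2: "norm (\<Phi> (x + t *\<^sub>R v) - \<Phi> x - ((\<lambda>h. g (x + t *\<^sub>R u) \<bullet> h - g x \<bullet> h) ((x + t *\<^sub>R v) - x)))
      \<le> norm ((x + t *\<^sub>R v) - x) * (2 * (t * norm u * (LH * R)))"
  proof (rule differentiable_bound_linearization[where S=S and f'="\<lambda>z h. g (z + t *\<^sub>R u) \<bullet> h - g z \<bullet> h"])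
    fix s :: real assume "s \<in> {0..1}" then show "x + s *\<^sub>R (x + t *\<^sub>R v - x) \<in> S"
      unfolding S_def by (rule seg_pt)
  next
    fix z assume "z \<in> S"
    have d1: "((\<lambda>z. f (z + t *\<^sub>R u)) has_derivative (\<lambda>h. g (z + t *\<^sub>R u) \<bullet> h)) (at z)"
    proof -
      have "((\<lambda>z. z + t *\<^sub>R u) has_derivative (\<lambda>h. h)) (at z)"
        by (auto intro!: derivative_eq_intros)
      from has_derivative_compose[OF this fd[OF SD(2)[OF \<open>z \<in> S\<close>]]]
      show ?thesis by (simp add: o_def)
    qed
    have "(\<Phi> has_derivative (\<lambda>h. g (z + t *\<^sub>R u) \<bullet> h - g z \<bullet> h)) (at z)"
      unfolding \<Phi>_def by (rule has_derivative_diff[OF d1 fd[OF SD(1)[OF \<open>z \<in> S\<close>]]])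
    then show "(\<Phi> has_derivative (\<lambda>h. g (z + t *\<^sub>R u) \<bullet> h - g z \<bullet> h)) (at z within S)"
      by (rule has_derivative_at_withinI)
  next
    fix z assume "z \<in> S"
    have "(\<lambda>h. g (z + t *\<^sub>R u) \<bullet> h - g z \<bullet> h) - (\<lambda>h. g (x + t *\<^sub>R u) \<bullet> h - g x \<bullet> h)
        = (\<lambda>h. (E z - E x) \<bullet> h)"
      by (rule ext) (simp add: E_def algebra_simps inner_diff_left)
    moreover have "onorm (\<lambda>h. (E z - E x) \<bullet> h) \<le> 2 * (t * norm u * (LH * R))"
    proof (rule onorm_le)
      fix h
      have "norm ((E z - E x) \<bullet> h) \<le> norm (E z - E x) * norm h"
        by (simp add: Cauchy_Schwarz_ineq2)
      also have "norm (E z - E x) \<le> 2 * (t * norm u * (LH * R))"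
        using Ebd[of z] Ebd[of x] \<open>z \<in> S\<close> xS norm_triangle_ineq4[of "E z" "E x"] unfolding S_def by linarith
      then have "norm (E z - E x) * norm h \<le> 2 * (t * norm u * (LH * R)) * norm h"
        by (simp add: mult_right_mono)
      finally show "norm ((E z - E x) \<bullet> h) \<le> 2 * (t * norm u * (LH * R)) * norm h" .
    qed
    ultimately show "onorm ((\<lambda>h. g (z + t *\<^sub>R u) \<bullet> h - g z \<bullet> h) - (\<lambda>h. g (x + t *\<^sub>R u) \<bullet> h - g x \<bullet> h))
        \<le> 2 * (t * norm u * (LH * R))" by simp
  qed (rule xS)
  have step3: "g (x + t *\<^sub>R u) \<bullet> (t *\<^sub>R v) - g x \<bullet> (t *\<^sub>R v) = t^2 * (v \<bullet> (H x *v u)) + t * (v \<bullet> E x)"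
    by (simp add: E_def inner_diff_left inner_diff_right inner_commute algebra_simps power2_eq_square
        matrix_vector_mult_scaleR)
  have e3: "\<bar>t * (v \<bullet> E x)\<bar> \<le> t * norm v * (t * norm u * (LH * R))"
  proof -
    have "\<bar>v \<bullet> E x\<bar> \<le> norm v * norm (E x)" by (rule Cauchy_Schwarz_ineq2)
    also have "\<dots> \<le> norm v * (t * norm u * (LH * R))" using Ebd[of x] xS unfolding S_def
      by (simp add: mult_left_mono)
    finally show ?thesis using t by (simp add: abs_mult mult_left_mono mult.assoc)
  qed
  have eq: "f (x + t *\<^sub>R u + t *\<^sub>R v) - f (x + t *\<^sub>R v) - f (x + t *\<^sub>R u) + f x
      = \<Phi> (x + t *\<^sub>R v) - \<Phi> x" by (simp add: \<Phi>_def algebra_simps)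
  have s2: "\<bar>\<Phi> (x + t *\<^sub>R v) - \<Phi> x - (t^2 * (v \<bullet> (H x *v u)) + t * (v \<bullet> E x))\<bar>
      \<le> t * norm v * (2 * (t * norm u * (LH * R)))"
    using step2 step3 t by simp
  have "\<bar>f (x + t *\<^sub>R u + t *\<^sub>R v) - f (x + t *\<^sub>R v) - f (x + t *\<^sub>R u) + f x - t^2 * (v \<bullet> (H x *v u))\<bar>
      \<le> t * norm v * (2 * (t * norm u * (LH * R))) + t * norm v * (t * norm u * (LH * R))"
    using s2 e3 unfolding eq by linarith
  also have "\<dots> = t^3 * (3 * LH * norm u * norm v * (norm u + norm v))"
    by (simp add: R_def power3_eq_cube algebra_simps)
  finally show ?thesis .
qed



lemma small_const_zero:
  fixes d K t0 :: real
  assumes t0: "t0 > 0" and K: "K \<ge> 0" and h: "\<And>t. 0 < t \<Longrightarrow> t \<le> t0 \<Longrightarrow> \<bar>d\<bar> \<le> t * K"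
  shows "d = 0"
proof (rule ccontr)
  assume "d \<noteq> 0"
  define t where "t = min t0 (\<bar>d\<bar> / (2 * K + 1))"
  have tp: "0 < t" using t0 \<open>d \<noteq> 0\<close> K by (simp add: t_def)
  have "t * K \<le> (\<bar>d\<bar> / (2 * K + 1)) * K" using K unfolding t_def by (intro mult_right_mono) auto
  also have "\<dots> < \<bar>d\<bar>" using K \<open>d \<noteq> 0\<close> by (simp add: field_simps add_pos_nonneg)
  finally show False using h[OF tp] by (simp add: t_def)
qed

lemma hess_sym:
  fixes f :: "real^'n \<Rightarrow> real" and g :: "real^'n \<Rightarrow> real^'n" and H :: "real^'n \<Rightarrow> real^'n^'n"
  assumes U: "open U" and xU: "x \<in> U"
    and grad: "\<forall>y \<in> U. (f has_derivative (\<lambda>h. g y \<bullet> h)) (at y)"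
    and hess: "\<forall>y \<in> U. (g has_derivative (\<lambda>h. H y *v h)) (at y)"
    and LH: "LH > 0"
    and H_lip: "\<forall>y \<in> U. \<forall>z \<in> U. onorm (\<lambda>v. (H y - H z) *v v) \<le> LH * norm (y - z)"
  shows "u \<bullet> (H x *v v) = v \<bullet> (H x *v u)"
proof -
  obtain r where r: "r > 0" "cball x r \<subseteq> U" using U xU open_contains_cball by blast
  define t0 where "t0 = r / (norm u + norm v + 1)"
  have t0: "t0 > 0" using r by (simp add: t0_def add_nonneg_pos)
  define K where "K = 3 * LH * norm u * norm v * (norm u + norm v)"
  have K: "K \<ge> 0" using LH by (simp add: K_def)
  have "\<bar>u \<bullet> (H x *v v) - v \<bullet> (H x *v u)\<bar> \<le> t * (2 * K)" if t: "0 < t" "t \<le> t0" for t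
  proof -
    have "t * (norm u + norm v) \<le> t0 * (norm u + norm v + 1)"
      using t by (intro mult_mono) auto
    moreover have "t0 * (norm u + norm v + 1) = r"
    proof -
      have "norm u + norm v + 1 \<noteq> 0" using norm_ge_zero[of u] norm_ge_zero[of v] by linarith
      then show ?thesis unfolding t0_def by simp
    qed
    ultimately have cb: "cball x (t * (norm u + norm v)) \<subseteq> U"
      using r by (intro order_trans[OF _ r(2)] subset_cball) auto
    have cb': "cball x (t * (norm v + norm u)) \<subseteq> U" using cb by (simp add: add.commute)

    have A: "\<bar>f (x + t *\<^sub>R u + t *\<^sub>R v) - f (x + t *\<^sub>R v) - f (x + t *\<^sub>R u) + f x - t^2 * (v \<bullet> (H x *v u))\<bar> \<le> t^3 * K"
      unfolding K_def
      by (rule delta_est) (use cb grad hess H_lip xU t LH in auto)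
    have B: "\<bar>f (x + t *\<^sub>R v + t *\<^sub>R u) - f (x + t *\<^sub>R u) - f (x + t *\<^sub>R v) + f x - t^2 * (u \<bullet> (H x *v v))\<bar> \<le> t^3 * K"
    proof -
      have "\<bar>f (x + t *\<^sub>R v + t *\<^sub>R u) - f (x + t *\<^sub>R u) - f (x + t *\<^sub>R v) + f x - t^2 * (u \<bullet> (H x *v v))\<bar> \<le> t^3 * (3 * LH * norm v * norm u * (norm v + norm u))"
        by (rule delta_est) (use cb' grad hess H_lip xU t LH in auto)
      then show ?thesis unfolding K_def by (simp add: algebra_simps)
    qed
    have "x + t *\<^sub>R v + t *\<^sub>R u = x + t *\<^sub>R u + t *\<^sub>R v" by (simp add: algebra_simps)
    then have "\<bar>t^2 * (u \<bullet> (H x *v v)) - t^2 * (v \<bullet> (H x *v u))\<bar> \<le> t^3 * (2 * K)"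
      using A B by (simp only:)
    then have "t^2 * \<bar>u \<bullet> (H x *v v) - v \<bullet> (H x *v u)\<bar> \<le> t^3 * (2 * K)"
      by (simp add: abs_mult right_diff_distrib[symmetric])
    then show ?thesis using t by (simp add: power2_eq_square power3_eq_cube)
  qed
  then have "u \<bullet> (H x *v v) - v \<bullet> (H x *v u) = 0"
    by (intro small_const_zero[OF t0, of "2 * K"]) (use K in auto)
  then show ?thesis by simp
qed



definition hb :: "real^'n^'n \<Rightarrow> real \<Rightarrow> real^'n \<Rightarrow> real^'n" where
  "hb H e v = H *v v + (2 * e) *\<^sub>R v"
definition qb :: "real^'n \<Rightarrow> real^'n^'n \<Rightarrow> real \<Rightarrow> real^'n \<Rightarrow> real" where
  "qb g H e y = g \<bullet> y + 1/2 * (y \<bullet> hb H e y)"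
definition symm :: "real^'n^'n \<Rightarrow> bool" where
  "symm H \<longleftrightarrow> (\<forall>u v. u \<bullet> (H *v v) = v \<bullet> (H *v u))"

definition cg_inv :: "real^'n \<Rightarrow> real^'n^'n \<Rightarrow> real \<Rightarrow> real \<Rightarrow> real^'n \<Rightarrow> real^'n \<Rightarrow> real^'n \<Rightarrow> bool" where
  "cg_inv g H e d y r p \<longleftrightarrow> r = hb H e y + g \<and> r \<noteq> 0 \<and> 0 \<le> y \<bullet> p \<and> qb g H e y \<le> 0 \<and> norm y < d \<and>
     (\<exists>V. subspace V \<and> y \<in> V \<and> (\<forall>v\<in>V. r \<bullet> v = 0) \<and> p + r \<in> V \<and> (\<forall>v\<in>V. p \<bullet> hb H e v = 0)
        \<and> (\<forall>v\<in>V. hb H e v \<in> span (insert p V)))"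

lemma hb_add: "hb H e (a + b) = hb H e a + hb H e b"
  by (simp add: hb_def matrix_vector_right_distrib algebra_simps)
lemma hb_scale: "hb H e (c *\<^sub>R a) = c *\<^sub>R hb H e a"
  by (simp add: hb_def matrix_vector_mult_scaleR algebra_simps)
lemma hb_zero: "hb H e 0 = 0"
  by (simp add: hb_def)
lemma hb_sym: "symm H \<Longrightarrow> u \<bullet> hb H e v = v \<bullet> hb H e u"
  by (simp add: symm_def hb_def inner_add_right inner_commute)

lemma md_qb: "model_decrease g H s = e * (norm s)\<^sup>2 - qb g H e s"
  by (simp add: model_decrease_def qb_def hb_def inner_add_right power2_norm_eq_inner algebra_simps)

lemma qb_step:
  assumes "symm H" "r = hb H e y + g"
  shows "qb g H e (y + s *\<^sub>R p) = qb g H e y + s * (r \<bullet> p) + s\<^sup>2 / 2 * (p \<bullet> hb H e p)"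
  using hb_sym[OF assms(1), of y e p] assms(2)
  by (simp add: qb_def hb_add hb_scale inner_add_left inner_add_right power2_eq_square algebra_simps inner_commute)

lemma norm_step: "(norm (y + s *\<^sub>R p))\<^sup>2 = (norm y)\<^sup>2 + 2 * s * (y \<bullet> p) + s\<^sup>2 * (norm p)\<^sup>2"
  unfolding power2_norm_eq_inner by (simp add: inner_add_left inner_add_right power2_eq_square algebra_simps inner_commute)

lemma bnd_exists:
  assumes "norm y < d" "p \<noteq> 0" "0 \<le> y \<bullet> p"
  shows "\<exists>s\<ge>0. bnd_step y p d = y + s *\<^sub>R p \<and> norm (y + s *\<^sub>R p) = d"
proof -
  have d: "0 < d" using assms(1) norm_ge_zero[of y] by linarith
  define T where "T = 2 * d / norm p"
  have T: "0 \<le> T" using d by (simp add: T_def)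
  have "norm (T *\<^sub>R p) = 2 * d" using assms(2) d by (simp add: T_def)
  then have "d \<le> norm (y + T *\<^sub>R p)"
    using norm_triangle_ineq2[of "T *\<^sub>R p" "-y"] assms(1) by (simp add: add.commute) 
  moreover have "norm (y + 0 *\<^sub>R p) \<le> d" using assms(1) by simp
  moreover have "continuous_on {0..T} (\<lambda>s. norm (y + s *\<^sub>R p))"
    by (intro continuous_intros)
  ultimately obtain s where "0 \<le> s" "s \<le> T" "norm (y + s *\<^sub>R p) = d"
    using IVT'[of "\<lambda>s. norm (y + s *\<^sub>R p)" 0 d T] T by auto
  then have ex: "\<exists>s. s \<ge> 0 \<and> norm (y + s *\<^sub>R p) = d" by blast
  show ?thesis unfolding bnd_step_def using someI_ex[OF ex] by blast
qed

lemma inv_rp: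
  assumes "cg_inv g H e d y r p"
  shows "r \<bullet> p = - (norm r)\<^sup>2" "p \<noteq> 0"
proof -
  from assms obtain V where "p + r \<in> V" "\<forall>v\<in>V. r \<bullet> v = 0" "r \<noteq> 0" unfolding cg_inv_def by blast
  then have "r \<bullet> (p + r) = 0" by blast
  then show rp: "r \<bullet> p = - (norm r)\<^sup>2" by (simp add: inner_add_right power2_norm_eq_inner)
  show "p \<noteq> 0" using rp \<open>r \<noteq> 0\<close> by auto
qed



lemma bnd_neg_post:
  assumes S: "symm H" and e: "e > 0" and I: "cg_inv g H e d y r p"
    and c: "p \<bullet> hb H e p \<le> e * (norm p)\<^sup>2"
  shows "norm (bnd_step y p d) = d \<and> e / 2 * d\<^sup>2 \<le> model_decrease g H (bnd_step y p d)"
proof -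
  have r: "r = hb H e y + g" and yp: "0 \<le> y \<bullet> p" and q: "qb g H e y \<le> 0" and ny: "norm y < d"
    using I unfolding cg_inv_def by auto
  have rp: "r \<bullet> p = - (norm r)\<^sup>2" and p0: "p \<noteq> 0" using inv_rp[OF I] by auto
  obtain s where s: "s \<ge> 0" "bnd_step y p d = y + s *\<^sub>R p" "norm (y + s *\<^sub>R p) = d"
    using bnd_exists[OF ny p0 yp] by blast
  have n2: "d\<^sup>2 = (norm y)\<^sup>2 + 2 * s * (y \<bullet> p) + s\<^sup>2 * (norm p)\<^sup>2"
    using norm_step[of y s p] s(3) by simp
  have sp: "s\<^sup>2 * (norm p)\<^sup>2 \<le> d\<^sup>2" using n2 s(1) yp by (simp add: add_nonneg_nonneg)
  have qs: "qb g H e (y + s *\<^sub>R p) = qb g H e y - s * (norm r)\<^sup>2 + s\<^sup>2 / 2 * (p \<bullet> hb H e p)"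
    using qb_step[OF S r] rp by simp
  have "s\<^sup>2 / 2 * (p \<bullet> hb H e p) \<le> s\<^sup>2 / 2 * (e * (norm p)\<^sup>2)"
    using c by (intro mult_left_mono) auto
  also have "\<dots> = e / 2 * (s\<^sup>2 * (norm p)\<^sup>2)" by simp
  also have "\<dots> \<le> e / 2 * d\<^sup>2" using sp e by (intro mult_left_mono) auto
  finally have "qb g H e (y + s *\<^sub>R p) \<le> e / 2 * d\<^sup>2"
    using qs q s(1) by (smt (verit) mult_nonneg_nonneg zero_le_power2)
  then show ?thesis using md_qb[of g H "y + s *\<^sub>R p" e] s by simp
qed

lemma bnd_norm_post:
  assumes S: "symm H" and e: "e > 0" and I: "cg_inv g H e d y r p"
    and c: "e * (norm p)\<^sup>2 < p \<bullet> hb H e p"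
    and big: "d \<le> norm (y + ((norm r)\<^sup>2 / (p \<bullet> hb H e p)) *\<^sub>R p)"
  shows "norm (bnd_step y p d) = d \<and> e / 2 * d\<^sup>2 \<le> model_decrease g H (bnd_step y p d)"
proof -
  have r: "r = hb H e y + g" and yp: "0 \<le> y \<bullet> p" and q: "qb g H e y \<le> 0" and ny: "norm y < d"
    using I unfolding cg_inv_def by auto
  have rp: "r \<bullet> p = - (norm r)\<^sup>2" and p0: "p \<noteq> 0" using inv_rp[OF I] by auto
  define C where "C = p \<bullet> hb H e p"
  define a where "a = (norm r)\<^sup>2 / C"
  have Cp: "C > 0" using c e p0 unfolding C_def by (smt (verit) mult_pos_pos zero_less_norm_iff zero_less_power)
  have a0: "a \<ge> 0" using Cp by (simp add: a_def)
  have aC: "a * C = (norm r)\<^sup>2" using Cp by (simp add: a_def)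
  obtain s where s: "s \<ge> 0" "bnd_step y p d = y + s *\<^sub>R p" "norm (y + s *\<^sub>R p) = d"
    using bnd_exists[OF ny p0 yp] by blast
  have sa: "s \<le> a"
  proof (rule ccontr)
    assume "\<not> s \<le> a"
    then have as: "a < s" by simp
    have "2 * a * (y \<bullet> p) \<le> 2 * s * (y \<bullet> p)" using as yp by (intro mult_right_mono) auto
    moreover have "a\<^sup>2 * (norm p)\<^sup>2 < s\<^sup>2 * (norm p)\<^sup>2"
    proof -
      have "a\<^sup>2 < s\<^sup>2" by (rule power_strict_mono) (use as a0 in auto)
      moreover have "0 < (norm p)\<^sup>2" using p0 by simp
      ultimately show ?thesis by (rule mult_strict_right_mono)
    qed
    ultimately have "(norm (y + a *\<^sub>R p))\<^sup>2 < (norm (y + s *\<^sub>R p))\<^sup>2"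
      unfolding norm_step by linarith
    moreover have "d\<^sup>2 \<le> (norm (y + a *\<^sub>R p))\<^sup>2"
      using big ny norm_ge_zero[of y] unfolding a_def C_def
      by (intro power_mono) linarith+
    ultimately show False using s(3) by simp
  qed
  have qs: "qb g H e (y + s *\<^sub>R p) = qb g H e y + s * C * (s / 2 - a)"
  proof -
    have 1: "qb g H e (y + s *\<^sub>R p) = qb g H e y + s * (r \<bullet> p) + s\<^sup>2 / 2 * C"
      using qb_step[OF S r, of s p] unfolding C_def by simp
    have 2: "s * (r \<bullet> p) = - (s * (a * C))" using rp aC by simp
    show ?thesis unfolding 1 2 by (simp add: power2_eq_square algebra_simps)
  qed
  have "s * C * (s / 2 - a) \<le> 0"
    using s(1) Cp sa a0 by (intro mult_nonneg_nonpos) auto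
  then have "qb g H e (y + s *\<^sub>R p) \<le> 0" using qs q by linarith
  moreover have "e / 2 * d\<^sup>2 \<le> e * d\<^sup>2" using e by simp
  ultimately show ?thesis using md_qb[of g H "y + s *\<^sub>R p" e] s by simp
qed

lemma int_res_post:
  assumes S: "symm H" and e: "e > 0" and z: "0 \<le> \<zeta>" and I: "cg_inv g H e d y r p"
    and c: "e * (norm p)\<^sup>2 < p \<bullet> hb H e p"
    and small: "norm (r + ((norm r)\<^sup>2 / (p \<bullet> hb H e p)) *\<^sub>R hb H e p)
       \<le> \<zeta> / 2 * min (norm g) (e * norm (y + ((norm r)\<^sup>2 / (p \<bullet> hb H e p)) *\<^sub>R p))"
  shows "e * (norm (y + ((norm r)\<^sup>2 / (p \<bullet> hb H e p)) *\<^sub>R p))\<^sup>2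
           \<le> model_decrease g H (y + ((norm r)\<^sup>2 / (p \<bullet> hb H e p)) *\<^sub>R p)
       \<and> norm (H *v (y + ((norm r)\<^sup>2 / (p \<bullet> hb H e p)) *\<^sub>R p)
              + (2 * e) *\<^sub>R (y + ((norm r)\<^sup>2 / (p \<bullet> hb H e p)) *\<^sub>R p) + g)
         \<le> \<zeta> / 2 * e * norm (y + ((norm r)\<^sup>2 / (p \<bullet> hb H e p)) *\<^sub>R p)"
proof -
  have r: "r = hb H e y + g" and q: "qb g H e y \<le> 0"
    using I unfolding cg_inv_def by auto
  have rp: "r \<bullet> p = - (norm r)\<^sup>2" and p0: "p \<noteq> 0" using inv_rp[OF I] by auto
  define C where "C = p \<bullet> hb H e p"
  define a where "a = (norm r)\<^sup>2 / C"
  have Cp: "C > 0" using c e p0 unfolding C_def by (smt (verit) mult_pos_pos zero_less_norm_iff zero_less_power)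
  have a0: "a \<ge> 0" using Cp by (simp add: a_def)
  have aC: "a * C = (norm r)\<^sup>2" using Cp by (simp add: a_def)
  have h1: "a\<^sup>2 / 2 * C = a * (norm r)\<^sup>2 / 2" using aC[symmetric] by (simp add: power2_eq_square)
  have qs: "qb g H e (y + a *\<^sub>R p) = qb g H e y - a * (norm r)\<^sup>2 / 2"
    using qb_step[OF S r, of a p] rp h1 unfolding C_def[symmetric] by simp
  have "0 \<le> a * (norm r)\<^sup>2 / 2" using a0 by simp
  then have "qb g H e (y + a *\<^sub>R p) \<le> 0" using qs q by linarith
  then have A: "e * (norm (y + a *\<^sub>R p))\<^sup>2 \<le> model_decrease g H (y + a *\<^sub>R p)"
    using md_qb[of g H "y + a *\<^sub>R p" e] by simp
  have "r + a *\<^sub>R hb H e p = hb H e (y + a *\<^sub>R p) + g" using r by (simp add: hb_add hb_scale)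
  then have "norm (hb H e (y + a *\<^sub>R p) + g) \<le> \<zeta> / 2 * min (norm g) (e * norm (y + a *\<^sub>R p))"
    using small unfolding a_def C_def by simp
  also have "\<dots> \<le> \<zeta> / 2 * (e * norm (y + a *\<^sub>R p))" using z by (intro mult_left_mono) auto
  finally show ?thesis using A unfolding a_def C_def hb_def by simp
qed



lemma step_inv:
  assumes S: "symm H" and e: "e > 0" and I: "cg_inv g H e d y r p"
    and c: "e * (norm p)\<^sup>2 < p \<bullet> hb H e p"
    and y': "norm (y + ((norm r)\<^sup>2 / (p \<bullet> hb H e p)) *\<^sub>R p) < d"
    and r'0: "r + ((norm r)\<^sup>2 / (p \<bullet> hb H e p)) *\<^sub>R hb H e p \<noteq> 0"
  shows "cg_inv g H e d (y + ((norm r)\<^sup>2 / (p \<bullet> hb H e p)) *\<^sub>R p)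
           (r + ((norm r)\<^sup>2 / (p \<bullet> hb H e p)) *\<^sub>R hb H e p)
           (- (r + ((norm r)\<^sup>2 / (p \<bullet> hb H e p)) *\<^sub>R hb H e p)
            + ((norm (r + ((norm r)\<^sup>2 / (p \<bullet> hb H e p)) *\<^sub>R hb H e p))\<^sup>2 / (norm r)\<^sup>2) *\<^sub>R p)"
proof -
  have r: "r = hb H e y + g" and yp: "0 \<le> y \<bullet> p" and q: "qb g H e y \<le> 0" and r0: "r \<noteq> 0"
    using I unfolding cg_inv_def by auto
  obtain V where V: "subspace V" "y \<in> V" "\<forall>v\<in>V. r \<bullet> v = 0" "p + r \<in> V"
     "\<forall>v\<in>V. p \<bullet> hb H e v = 0" "\<forall>v\<in>V. hb H e v \<in> span (insert p V)"
    using I unfolding cg_inv_def by blast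
  have rp: "r \<bullet> p = - (norm r)\<^sup>2" and p0: "p \<noteq> 0" using inv_rp[OF I] by auto
  define C where "C = p \<bullet> hb H e p"
  define a where "a = (norm r)\<^sup>2 / C"
  define y1 where "y1 = y + a *\<^sub>R p"
  define r1 where "r1 = r + a *\<^sub>R hb H e p"
  define b where "b = (norm r1)\<^sup>2 / (norm r)\<^sup>2"
  define p1 where "p1 = - r1 + b *\<^sub>R p"
  define V1 where "V1 = span (insert p V)"
  have Cp: "C > 0" using c e p0 unfolding C_def by (smt (verit) mult_pos_pos zero_less_norm_iff zero_less_power)
  have nr: "(norm r)\<^sup>2 > 0" using r0 by simp
  have a0: "a > 0" using Cp nr by (simp add: a_def)
  have aC: "a * C = (norm r)\<^sup>2" using Cp by (simp add: a_def)
  have b0: "b \<ge> 0" by (simp add: b_def)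
  have spanV: "span V = V" using V(1) by (simp add: span_eq_iff)
  have memV1: "v \<in> V1 \<longleftrightarrow> (\<exists>k. v - k *\<^sub>R p \<in> V)" for v
    using span_breakdown_eq[of v p V] spanV unfolding V1_def by simp
  have decomp: "\<exists>w k. w \<in> V \<and> v = w + k *\<^sub>R p" if vV: "v \<in> V1" for v
  proof -
    obtain k where "v - k *\<^sub>R p \<in> V" using vV unfolding memV1 by blast
    moreover have "v = (v - k *\<^sub>R p) + k *\<^sub>R p" by simp
    ultimately show ?thesis by blast
  qed
  have p_V1: "p \<in> V1" unfolding V1_def by (simp add: span_base)
  have sub1: "subspace V1" unfolding V1_def by (rule subspace_span)
  have e1: "r1 = hb H e y1 + g" unfolding r1_def y1_def using r by (simp add: hb_add hb_scale)
  have r1p: "r1 \<bullet> p = 0"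
  proof -
    have "r1 \<bullet> p = r \<bullet> p + a * C" unfolding r1_def C_def by (simp add: inner_add_left inner_add_right inner_commute)
    then show ?thesis using rp aC by simp
  qed
  have r1V: "r1 \<bullet> w = 0" if "w \<in> V" for w
  proof -
    have 1: "r1 \<bullet> w = r \<bullet> w + a * (w \<bullet> hb H e p)" unfolding r1_def by (simp add: inner_add_left inner_add_right inner_commute)
    have 2: "w \<bullet> hb H e p = p \<bullet> hb H e w" by (rule hb_sym[OF S])
    show ?thesis unfolding 1 2 using V(3,5) that by simp
  qed
  have r1V1: "r1 \<bullet> v = 0" if vV: "v \<in> V1" for v
  proof -
    obtain w k where "w \<in> V" "v = w + k *\<^sub>R p" using decomp[OF vV] by blast
    then show ?thesis using r1V r1p by (simp add: inner_add_right)
  qed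
  have rV1: "r \<in> V1"
  proof -
    have "r - (-1) *\<^sub>R p \<in> V" using V(4) by (simp add: add.commute)
    then show ?thesis using memV1[of r] by blast
  qed
  have yV1: "y1 \<in> V1"
  proof -
    have "y1 - a *\<^sub>R p \<in> V" using V(2) unfolding y1_def by simp
    then show ?thesis using memV1[of y1] by blast
  qed
  have r1r: "r1 \<bullet> r = 0" using r1V1[OF rV1] .
  have r1y: "r1 \<bullet> y1 = 0" using r1V1[OF yV1] .
  have ypos: "0 \<le> y1 \<bullet> p1"
  proof -
    have 1: "y1 \<bullet> p1 = b * (y1 \<bullet> p)" unfolding p1_def using r1y by (simp add: inner_add_right inner_diff_right inner_commute)
    have 2: "y1 \<bullet> p = y \<bullet> p + a * (norm p)\<^sup>2" unfolding y1_def
      by (simp add: inner_add_left power2_norm_eq_inner)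
    show ?thesis unfolding 1 2 using b0 yp a0 by simp
  qed
  have qpos: "qb g H e y1 \<le> 0"
  proof -
    have 1: "qb g H e y1 = qb g H e y + a * (r \<bullet> p) + a\<^sup>2 / 2 * C"
      unfolding y1_def C_def using qb_step[OF S r] by simp
    have 2: "a * (r \<bullet> p) = - (a * (a * C))" using rp aC by simp
    have "qb g H e y1 = qb g H e y - a * (a * C) / 2" unfolding 1 2 by (simp add: power2_eq_square)
    moreover have "0 \<le> a * (a * C)" using a0 Cp by simp
    ultimately show ?thesis using q by linarith
  qed
  have pr1: "p1 + r1 \<in> V1" unfolding p1_def using p_V1 sub1 by (simp add: subspace_scale)
  have hbp: "hb H e p = (1 / a) *\<^sub>R (r1 - r)" unfolding r1_def using a0 by simp
  have conj: "p1 \<bullet> hb H e v = 0" if vV: "v \<in> V1" for v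
  proof -
    obtain w k where w: "w \<in> V" "v = w + k *\<^sub>R p" using decomp[OF vV] by blast
    have hw: "hb H e w \<in> V1" using V(6) w(1) unfolding V1_def by blast
    have A: "p1 \<bullet> hb H e w = 0"
      unfolding p1_def using r1V1[OF hw] V(5) w(1) by (simp add: inner_add_left inner_diff_left)
    have B: "p1 \<bullet> hb H e p = 0"
    proof -
      have "r1 \<bullet> hb H e p = (1 / a) * (norm r1)\<^sup>2"
        unfolding hbp using r1r by (simp add: inner_diff_right power2_norm_eq_inner)
      moreover have "b * C = (1 / a) * (norm r1)\<^sup>2"
        unfolding b_def a_def using Cp nr by (simp add: field_simps)
      ultimately show ?thesis unfolding p1_def C_def by (simp add: inner_add_left inner_diff_left)
    qed
    show ?thesis using A B w(2) by (simp add: hb_add hb_scale inner_add_right)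
  qed
  have hbV1: "hb H e v \<in> span (insert p1 V1)" if vV: "v \<in> V1" for v
  proof -
    obtain w k where w: "w \<in> V" "v = w + k *\<^sub>R p" using decomp[OF vV] by blast
    have sub: "V1 \<subseteq> span (insert p1 V1)" by (meson span_superset subset_insertI order_trans)
    have hw: "hb H e w \<in> span (insert p1 V1)" using V(6) w(1) sub unfolding V1_def by blast
    have r1s: "r1 \<in> span (insert p1 V1)"
    proof -
      have "r1 = b *\<^sub>R p - p1" unfolding p1_def by simp
      moreover have "p \<in> span (insert p1 V1)" using p_V1 sub by blast
      moreover have "p1 \<in> span (insert p1 V1)" by (simp add: span_base)
      ultimately show ?thesis by (simp add: span_diff span_scale)
    qed
    have rs: "r \<in> span (insert p1 V1)" using rV1 sub by blast
    have "hb H e p \<in> span (insert p1 V1)" unfolding hbp using r1s rs by (simp add: span_diff span_scale)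
    then show ?thesis using hw w(2) by (simp add: hb_add hb_scale span_add span_scale)
  qed
  have r10: "r1 \<noteq> 0" using r'0 unfolding r1_def a_def C_def .
  have y1d: "norm y1 < d" using y' unfolding y1_def a_def C_def .
  have "cg_inv g H e d y1 r1 p1"
    unfolding cg_inv_def
    apply (intro conjI exI[of _ V1])
    using e1 r10 ypos qpos y1d pr1 sub1 yV1 r1V1 conj hbV1 by auto
  then show ?thesis unfolding y1_def r1_def p1_def b_def a_def C_def .
qed



definition cg_post :: "real^'n \<Rightarrow> real^'n^'n \<Rightarrow> real \<Rightarrow> real \<Rightarrow> real \<Rightarrow> (real^'n) \<times> cgflag \<Rightarrow> bool" where
  "cg_post g H e d \<zeta> res \<longleftrightarrow>
     ((snd res = BND_NEG \<or> snd res = BND_NORM) \<longrightarrow> norm (fst res) = d \<and> e / 2 * d\<^sup>2 \<le> model_decrease g H (fst res))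
   \<and> (snd res = INT_RES \<longrightarrow> norm (fst res) < d \<and> e * (norm (fst res))\<^sup>2 \<le> model_decrease g H (fst res)
        \<and> norm (H *v fst res + (2 * e) *\<^sub>R fst res + g) \<le> \<zeta> / 2 * e * norm (fst res))"

lemma cg_loop_post:
  assumes S: "symm H" and e: "e > 0" and z: "0 \<le> \<zeta>"
  shows "cg_inv g H e d y r p \<Longrightarrow> cg_post g H e d \<zeta> (cg_loop fuel j kmax g H e d \<zeta> y r p)"
proof (induction fuel arbitrary: j y r p)
  case 0
  then show ?case by (simp add: cg_post_def)
next
  case (Suc fuel)
  note I = Suc.prems
  define a where "a = (norm r)\<^sup>2 / (p \<bullet> hb H e p)"
  define y1 where "y1 = y + a *\<^sub>R p"
  define r1 where "r1 = r + a *\<^sub>R hb H e p"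
  define p1 where "p1 = - r1 + ((norm r1)\<^sup>2 / (norm r)\<^sup>2) *\<^sub>R p"
  have unf: "cg_loop (Suc fuel) j kmax g H e d \<zeta> y r p =
    (if \<not> real j < kmax then (y, INT_MAX)
     else if p \<bullet> hb H e p \<le> e * (norm p)\<^sup>2 then (bnd_step y p d, BND_NEG)
     else if d \<le> norm y1 then (bnd_step y p d, BND_NORM)
     else if norm r1 \<le> \<zeta> / 2 * min (norm g) (e * norm y1) then (y1, INT_RES)
     else cg_loop fuel (Suc j) kmax g H e d \<zeta> y1 r1 p1)"
    unfolding a_def y1_def r1_def p1_def by (simp add: Let_def hb_def)
  show ?case
  proof (cases "\<not> real j < kmax")
    case True then show ?thesis unfolding unf by (simp add: cg_post_def)
  next
    case j: False
    show ?thesis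
    proof (cases "p \<bullet> hb H e p \<le> e * (norm p)\<^sup>2")
      case True
      then show ?thesis using j bnd_neg_post[OF S e I True] unfolding unf by (simp add: cg_post_def)
    next
      case c: False
      then have c': "e * (norm p)\<^sup>2 < p \<bullet> hb H e p" by simp
      show ?thesis
      proof (cases "d \<le> norm y1")
        case True
        then show ?thesis using j c bnd_norm_post[OF S e I c'] unfolding unf y1_def a_def
          by (simp add: cg_post_def)
      next
        case y: False
        show ?thesis
        proof (cases "norm r1 \<le> \<zeta> / 2 * min (norm g) (e * norm y1)")
          case True
          then show ?thesis using j c y int_res_post[OF S e z I c'] unfolding unf y1_def r1_def a_def
            by (simp add: cg_post_def)
        next
          case False
          have r10: "r1 \<noteq> 0"
          proof
            assume "r1 = 0"
            moreover have "0 \<le> \<zeta> / 2 * min (norm g) (e * norm y1)" using z e by simp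
            ultimately show False using False by simp
          qed
          have "cg_inv g H e d y1 r1 p1"
            using step_inv[OF S e I c'] y r10 unfolding y1_def r1_def p1_def a_def by simp
          then have "cg_post g H e d \<zeta> (cg_loop fuel (Suc j) kmax g H e d \<zeta> y1 r1 p1)"
            by (rule Suc.IH)
          then show ?thesis using j c y False unfolding unf by simp
        qed
      qed
    qed
  qed
qed

lemma cg_inv_init:
  assumes "g \<noteq> 0" "d > 0"
  shows "cg_inv g H e d 0 g (- g)"
  unfolding cg_inv_def
  apply (intro conjI exI[of _ "{0}"])
  using assms by (auto simp: hb_zero qb_def subspace_0 span_zero)

lemma truncated_cg_post:
  assumes S: "symm H" and e: "e > 0" and z: "0 \<le> \<zeta>" and g: "g \<noteq> 0" and d: "d > 0"
  shows "cg_post g H e d \<zeta> (truncated_cg g H e d \<zeta> capCG M)"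
  unfolding truncated_cg_def by (rule cg_loop_post[OF S e z cg_inv_init[OF g d]])



lemma final_ineq:
  fixes e n G L bb :: real
  assumes e: "e > 0" and n: "n \<ge> 0" and G: "G \<ge> 0" and L: "L > 0" and bb: "0 \<le> bb" "bb \<le> 5/2"
    and Gb: "G \<le> L * n\<^sup>2 + bb * e * n"
  shows "min (G\<^sup>2 / e) (e ^ 3) \<le> (4 * (7 + 2 * L)) * (e * n\<^sup>2)"
proof -
  have en: "0 \<le> e * n\<^sup>2" using e by simp
  show ?thesis
  proof (cases "e \<le> n")
    case True
    have "e * e \<le> n * n" using True e by (intro mult_mono) auto
    then have "e * (e * e) \<le> e * (n * n)" using e by (intro mult_left_mono) auto
    then have "e ^ 3 \<le> e * n\<^sup>2" unfolding power3_eq_cube power2_eq_square by (simp add: mult.assoc)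
    also have "\<dots> \<le> (4 * (7 + 2 * L)) * (e * n\<^sup>2)"
    proof -
      have "1 * (e * n\<^sup>2) \<le> (4 * (7 + 2 * L)) * (e * n\<^sup>2)" using en L by (intro mult_right_mono) auto
      then show ?thesis by simp
    qed
    finally show ?thesis by linarith
  next
    case ne: False
    show ?thesis
    proof (cases "L * n \<le> bb * e")
      case True
      have "(L * n) * n \<le> (bb * e) * n" using True n by (rule mult_right_mono)
      then have "L * n\<^sup>2 \<le> bb * e * n" by (simp add: power2_eq_square mult.assoc)
      moreover have "bb * (e * n) \<le> 5/2 * (e * n)" using bb e n by (intro mult_right_mono) auto
      ultimately have "G \<le> 5 * (e * n)" using Gb by (simp add: mult.assoc)
      then have "G\<^sup>2 \<le> (5 * (e * n))\<^sup>2" using G by (intro power_mono) auto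
      then have "G\<^sup>2 / e \<le> 25 * (e * n\<^sup>2)" using e by (simp add: field_simps power2_eq_square)
      moreover have "25 * (e * n\<^sup>2) \<le> (4 * (7 + 2 * L)) * (e * n\<^sup>2)" using L en
        by (intro mult_right_mono) auto
      ultimately show ?thesis by linarith
    next
      case False
      have "(bb * e) * n \<le> (L * n) * n" using False n by (intro mult_right_mono) auto
      then have "bb * e * n \<le> L * n\<^sup>2" by (simp add: power2_eq_square mult.assoc)
      then have G2: "G \<le> 2 * L * n\<^sup>2" using Gb by linarith
      have bnd: "min (G\<^sup>2 / e) (e ^ 3) \<le> 2 * L * (e * n\<^sup>2)"
      proof (cases "G \<le> e\<^sup>2")
        case True
        have "G\<^sup>2 / e = G * (G / e)" by (simp add: power2_eq_square)
        also have "\<dots> \<le> G * e" using True e G by (intro mult_left_mono) (auto simp: field_simps power2_eq_square)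
        also have "\<dots> \<le> 2 * L * n\<^sup>2 * e" using G2 e by (intro mult_right_mono) auto
        finally show ?thesis by (simp add: algebra_simps)
      next
        case False
        then have "e\<^sup>2 \<le> 2 * L * n\<^sup>2" using G2 by linarith
        then have "e * e\<^sup>2 \<le> e * (2 * L * n\<^sup>2)" using e by (intro mult_left_mono) auto
        then show ?thesis by (simp add: power3_eq_cube power2_eq_square algebra_simps)
      qed
      moreover have "2 * L * (e * n\<^sup>2) \<le> (4 * (7 + 2 * L)) * (e * n\<^sup>2)" using L en
        by (intro mult_right_mono) auto
      ultimately show ?thesis by linarith
    qed
  qed
qed



lemma rho_bound:
  assumes "alg4_rho f g H xk sk \<ge> \<eta>" "\<eta> > 0"
  shows "model_decrease (g xk) (H xk) sk > 0 \<longrightarrow> \<eta> * model_decrease (g xk) (H xk) sk \<le> f xk - f (xk + sk)"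
  using assms unfolding alg4_rho_def by (auto simp: pos_le_divide_eq)

lemma rho_pos:
  assumes "alg4_rho f g H xk sk \<ge> \<eta>" "\<eta> > 0"
  shows "sk \<noteq> 0"
  using assms unfolding alg4_rho_def model_decrease_def by auto

lemma meo_md:
  assumes "meo_output g H e d s"
  shows "e / 4 * (norm s)\<^sup>2 \<le> model_decrease g H s" "norm s = d"
  using assms unfolding meo_output_def model_decrease_def by auto

theorem lemma4p3:
  fixes f :: "real^'n \<Rightarrow> real" and g :: "real^'n \<Rightarrow> real^'n" and H :: "real^'n \<Rightarrow> real^'n^'n"
    and U :: "(real^'n) set"
    and \<epsilon>g \<epsilon>H \<gamma>1 \<gamma>2 \<psi> \<delta>0 \<delta>max \<eta> \<zeta> \<xi> M Lg LH flow :: real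
    and x0 :: "real^'n" and capCG :: bool
    and x :: "nat \<Rightarrow> real^'n" and \<delta> :: "nat \<Rightarrow> real" and s :: "nat \<Rightarrow> real^'n"
    and K :: "nat set" and k :: nat
  assumes params: "\<epsilon>g > 0" "\<epsilon>H > 0" "0 < \<gamma>1" "\<gamma>1 < 1" "\<gamma>2 \<ge> 1"
      "1 / \<gamma>2 < \<psi>" "\<psi> \<le> 1" "\<delta>0 > 0" "\<delta>max \<ge> \<delta>0" "0 < \<eta>" "\<eta> < 1"
      "0 < \<zeta>" "\<zeta> < 1" "0 \<le> \<xi>" "\<xi> < 1" "M \<ge> Lg"
    and run: "alg4_realization f g H \<epsilon>g \<epsilon>H \<gamma>1 \<gamma>2 \<psi> x0 \<delta>0 \<delta>max \<eta> \<zeta> capCG M x \<delta> s K"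
    and bdd: "\<forall>j \<in> K. flow \<le> f (x j)"
    and U_open: "open U"
    and segs: "\<forall>j \<in> K. closed_segment (x j) (x j + s j) \<subseteq> U"
    and grad: "\<forall>y \<in> U. (f has_derivative (\<lambda>h. g y \<bullet> h)) (at y)"
    and hess: "\<forall>y \<in> U. (g has_derivative (\<lambda>h. H y *v h)) (at y)"
    and hess_cont: "continuous_on U H"
    and Lg_pos: "Lg > 0" and LH_pos: "LH > 0"
    and g_lip: "\<forall>y \<in> U. \<forall>z \<in> U. norm (g y - g z) \<le> Lg * norm (y - z)"
    and H_lip: "\<forall>y \<in> U. \<forall>z \<in> U. onorm (\<lambda>v. (H y - H z) *v v) \<le> LH * norm (y - z)"
    and kK: "k \<in> K"
  shows "(norm (s k) = \<delta> k \<and> alg4_rho f g H (x k) (s k) \<ge> \<eta> \<longrightarrow>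
            f (x k) - f (x (Suc k)) \<ge> \<eta> / 4 * \<epsilon>H * (\<delta> k)\<^sup>2)
       \<and> (norm (s k) < \<delta> k \<and> alg4_rho f g H (x k) (s k) \<ge> \<eta> \<longrightarrow>
            norm (g (x k)) > \<epsilon>g
            \<and> snd (cg_out (g (x k)) (H (x k)) \<epsilon>H (\<delta> k) \<zeta> capCG M) = INT_RES
            \<and> f (x k) - f (x (Suc k)) \<ge>
                \<eta> / (4 * (7 + 2 * LH)) * min ((norm (g (x (Suc k))))\<^sup>2 / \<epsilon>H) (\<epsilon>H ^ 3))"
proof -
  define co where "co = cg_out (g (x k)) (H (x k)) \<epsilon>H (\<delta> k) \<zeta> capCG M"
  have stepk: "(if accept_cg \<epsilon>g (g (x k)) (snd co) then s k = fst co
                else meo_output (g (x k)) (H (x k)) \<epsilon>H (\<delta> k) (s k))"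
    and upd: "alg4_rho f g H (x k) (s k) \<ge> \<eta> \<longrightarrow> x (Suc k) = x k + s k"
    using run kK unfolding alg4_realization_def co_def by (auto split: if_splits)
  have seg: "closed_segment (x k) (x k + s k) \<subseteq> U" using segs kK by blast
  have xU: "x k \<in> U" using seg by auto
  have S: "symm (H (x k))" unfolding symm_def
    using hess_sym[OF U_open xU grad hess LH_pos H_lip] by blast
  have z0: "0 \<le> \<zeta>" using params by simp
  have acc: "g (x k) \<noteq> 0 \<and> co = truncated_cg (g (x k)) (H (x k)) \<epsilon>H (\<delta> k) \<zeta> capCG M"
    if "accept_cg \<epsilon>g (g (x k)) (snd co)"
    using that params(1) unfolding co_def cg_out_def accept_cg_def by (auto split: if_splits)
  have post: "cg_post (g (x k)) (H (x k)) \<epsilon>H (\<delta> k) \<zeta> co"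
    if "accept_cg \<epsilon>g (g (x k)) (snd co)" "\<delta> k > 0"
    using acc[OF that(1)] truncated_cg_post[OF S params(2) z0 _ that(2)] by simp
  define md where "md = model_decrease (g (x k)) (H (x k)) (s k)"
  have part1: "f (x k) - f (x (Suc k)) \<ge> \<eta> / 4 * \<epsilon>H * (\<delta> k)\<^sup>2"
    if n: "norm (s k) = \<delta> k" and rho: "alg4_rho f g H (x k) (s k) \<ge> \<eta>"
  proof -
    have s0: "s k \<noteq> 0" using rho_pos[OF rho params(10)] .
    then have d0: "\<delta> k > 0" using n zero_less_norm_iff[of "s k"] by simp
    have mdb: "\<epsilon>H / 4 * (\<delta> k)\<^sup>2 \<le> md"
    proof (cases "accept_cg \<epsilon>g (g (x k)) (snd co)")
      case True
      have sk: "s k = fst co" using stepk True by simp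
      have P: "cg_post (g (x k)) (H (x k)) \<epsilon>H (\<delta> k) \<zeta> co" using post[OF True d0] .
      have "snd co = BND_NEG \<or> snd co = BND_NORM"
      proof -
        have "snd co \<noteq> INT_MAX" using True unfolding accept_cg_def by auto
        moreover have "snd co \<noteq> INT_RES" using P n sk unfolding cg_post_def by auto
        ultimately show ?thesis by (cases "snd co") auto
      qed
      then have "\<epsilon>H / 2 * (\<delta> k)\<^sup>2 \<le> md" using P sk unfolding cg_post_def md_def by auto
      moreover have "\<epsilon>H / 4 * (\<delta> k)\<^sup>2 \<le> \<epsilon>H / 2 * (\<delta> k)\<^sup>2" using params(2) by simp
      ultimately show ?thesis by linarith
    next
      case False
      then have "meo_output (g (x k)) (H (x k)) \<epsilon>H (\<delta> k) (s k)" using stepk by simp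
      then show ?thesis using meo_md(1)[of "g (x k)" "H (x k)" \<epsilon>H "\<delta> k" "s k"] n unfolding md_def by simp
    qed
    have "0 < \<epsilon>H / 4 * (\<delta> k)\<^sup>2" using d0 params(2) by simp
    then have mdp: "md > 0" using mdb by linarith
    have "\<eta> * md \<le> f (x k) - f (x k + s k)" using rho_bound[OF rho params(10)] mdp unfolding md_def by simp
    moreover have "\<eta> * (\<epsilon>H / 4 * (\<delta> k)\<^sup>2) \<le> \<eta> * md" using mdb params(10) by (intro mult_left_mono) auto
    ultimately show ?thesis using upd rho by (simp add: algebra_simps)
  qed
  have part2: "norm (g (x k)) > \<epsilon>g \<and> snd co = INT_RES \<and> f (x k) - f (x (Suc k)) \<ge>
                \<eta> / (4 * (7 + 2 * LH)) * min ((norm (g (x (Suc k))))\<^sup>2 / \<epsilon>H) (\<epsilon>H ^ 3)"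
    if n: "norm (s k) < \<delta> k" and rho: "alg4_rho f g H (x k) (s k) \<ge> \<eta>"
  proof -
    have s0: "s k \<noteq> 0" using rho_pos[OF rho params(10)] .
    have d0: "\<delta> k > 0" using n norm_ge_zero[of "s k"] by linarith
    have A: "accept_cg \<epsilon>g (g (x k)) (snd co)"
    proof (rule ccontr)
      assume "\<not> ?thesis"
      then have "meo_output (g (x k)) (H (x k)) \<epsilon>H (\<delta> k) (s k)" using stepk by simp
      then show False using meo_md(2) n by fastforce
    qed
    have sk: "s k = fst co" using stepk A by simp
    have P: "cg_post (g (x k)) (H (x k)) \<epsilon>H (\<delta> k) \<zeta> co" using post[OF A d0] .
    have IR: "snd co = INT_RES"
    proof -
      have "snd co \<noteq> INT_MAX" using A unfolding accept_cg_def by auto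
      moreover have "snd co \<noteq> BND_NEG" "snd co \<noteq> BND_NORM" using P n sk unfolding cg_post_def by auto
      ultimately show ?thesis by (cases "snd co") auto
    qed
    have gk: "norm (g (x k)) > \<epsilon>g" using A IR unfolding accept_cg_def by auto
    define nn where "nn = norm (s k)"
    have nn0: "nn > 0" using s0 by (simp add: nn_def)
    have mdb: "\<epsilon>H * nn\<^sup>2 \<le> md" and res: "norm (H (x k) *v s k + (2 * \<epsilon>H) *\<^sub>R s k + g (x k)) \<le> \<zeta> / 2 * \<epsilon>H * nn"
      using P IR sk unfolding cg_post_def md_def nn_def by auto
    have "0 < \<epsilon>H * nn\<^sup>2" using nn0 params(2) by simp
    then have mdp: "md > 0" using mdb by linarith
    have fd: "\<eta> * md \<le> f (x k) - f (x (Suc k))"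
      using rho_bound[OF rho params(10)] mdp upd rho unfolding md_def by simp
    define G where "G = norm (g (x k + s k))"
    have tay: "norm (g (x k + s k) - g (x k) - H (x k) *v ((x k + s k) - x k)) \<le> norm ((x k + s k) - x k) * (LH * nn)"
    proof (rule g_taylor[of "closed_segment (x k) (x k + s k)"])
      show "\<forall>y\<in>closed_segment (x k) (x k + s k). (g has_derivative (*v) (H y)) (at y)"
        using seg hess by blast
      show "\<forall>y\<in>closed_segment (x k) (x k + s k). onorm (\<lambda>v. (H y - H (x k)) *v v) \<le> LH * nn"
      proof
        fix y assume y: "y \<in> closed_segment (x k) (x k + s k)"
        have "onorm (\<lambda>v. (H y - H (x k)) *v v) \<le> LH * norm (y - x k)" using H_lip seg y xU by blast
        also have "\<dots> \<le> LH * nn" using segment_bound1[OF y] LH_pos unfolding nn_def by (intro mult_left_mono) auto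
        finally show "onorm (\<lambda>v. (H y - H (x k)) *v v) \<le> LH * nn" .
      qed
    qed auto
    then have tay': "norm (g (x k + s k) - g (x k) - H (x k) *v s k) \<le> LH * nn\<^sup>2"
      by (simp add: nn_def power2_eq_square algebra_simps)
    have "G \<le> norm (g (x k + s k) - g (x k) - H (x k) *v s k)
             + norm (H (x k) *v s k + (2 * \<epsilon>H) *\<^sub>R s k + g (x k)) + norm ((2 * \<epsilon>H) *\<^sub>R s k)"
    proof -
      have "g (x k + s k) = (g (x k + s k) - g (x k) - H (x k) *v s k)
             + (H (x k) *v s k + (2 * \<epsilon>H) *\<^sub>R s k + g (x k)) - (2 * \<epsilon>H) *\<^sub>R s k" by simp
      then have "G = norm ((g (x k + s k) - g (x k) - H (x k) *v s k)
             + (H (x k) *v s k + (2 * \<epsilon>H) *\<^sub>R s k + g (x k)) - (2 * \<epsilon>H) *\<^sub>R s k)" unfolding G_def by metis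
      also have "\<dots> \<le> norm ((g (x k + s k) - g (x k) - H (x k) *v s k)
             + (H (x k) *v s k + (2 * \<epsilon>H) *\<^sub>R s k + g (x k))) + norm ((2 * \<epsilon>H) *\<^sub>R s k)"
        by (rule norm_triangle_ineq4)
      also have "norm ((g (x k + s k) - g (x k) - H (x k) *v s k)
             + (H (x k) *v s k + (2 * \<epsilon>H) *\<^sub>R s k + g (x k))) \<le> norm (g (x k + s k) - g (x k) - H (x k) *v s k)
             + norm (H (x k) *v s k + (2 * \<epsilon>H) *\<^sub>R s k + g (x k))"
        by (rule norm_triangle_ineq)
      finally show ?thesis by simp
    qed
    also have "norm ((2 * \<epsilon>H) *\<^sub>R s k) = 2 * \<epsilon>H * nn" using params(2) by (simp add: nn_def)
    finally have Gb: "G \<le> LH * nn\<^sup>2 + (2 + \<zeta> / 2) * \<epsilon>H * nn"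
      using tay' res by (simp add: algebra_simps)
    have fi: "min (G\<^sup>2 / \<epsilon>H) (\<epsilon>H ^ 3) \<le> (4 * (7 + 2 * LH)) * (\<epsilon>H * nn\<^sup>2)"
      by (rule final_ineq[OF params(2) _ _ LH_pos _ _ Gb]) (use nn0 params in \<open>auto simp: G_def\<close>)
    have "\<eta> / (4 * (7 + 2 * LH)) * min (G\<^sup>2 / \<epsilon>H) (\<epsilon>H ^ 3) \<le> \<eta> * (\<epsilon>H * nn\<^sup>2)"
    proof -
      have c: "4 * (7 + 2 * LH) > 0" using LH_pos by simp
      have "min (G\<^sup>2 / \<epsilon>H) (\<epsilon>H ^ 3) / (4 * (7 + 2 * LH)) \<le> \<epsilon>H * nn\<^sup>2"
        using fi c by (simp add: pos_divide_le_eq mult.commute)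
      then have "\<eta> * (min (G\<^sup>2 / \<epsilon>H) (\<epsilon>H ^ 3) / (4 * (7 + 2 * LH))) \<le> \<eta> * (\<epsilon>H * nn\<^sup>2)"
        using params(10) by (intro mult_left_mono) auto
      then show ?thesis by simp
    qed
    also have "\<dots> \<le> \<eta> * md" using mdb params(10) by (intro mult_left_mono) auto
    finally have "\<eta> / (4 * (7 + 2 * LH)) * min (G\<^sup>2 / \<epsilon>H) (\<epsilon>H ^ 3) \<le> f (x k) - f (x (Suc k))"
      using fd by linarith
    then show ?thesis using gk IR upd rho unfolding G_def by simp
  qed
  show ?thesis using part1 part2 unfolding co_def by blast
qed

end
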